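(* For every $I\in\mathcal I$, there is exactly one $\vartriangleleft$-minimal set in $\mathcal M(I)$.
   Context: Let $(a_i)_{i=1,\dots,n}$ be a sequence of distinct integers between $1$ and $n$, and set $a_0=0$; write $A=(a_i)_{i=0,1,\dots,n}$. A set $I\subseteq\{0\}\cup[n]$ is feasible if $a_i<a_j$ for all $i,j\in I$ with $i<j$; $\mathcal I$ denotes the family of feasible sets of maximum cardinality. Patience sorting: start with empty piles $P_0,\dots,P_n$; for $i=0,1,\dots,n$ in order, put $a_i$ on top of the pile $P_j$ with smallest index $j$ such that $P_j$ is empty or the top element of $P_j$ is greater than $a_i$. Let $P_0,\dots,P_k$ be the resulting nonempty piles. Say $a_u$ is placed below $a_v$ on a pile if both lie on the same pile and $a_u$ was put there before $a_v$. For $I,J\in\mathcal I$, write $I\vartriangleleft J$ if $I\setminus J=\{u\}$ and $J\setminus I=\{v\}$ for some $u,v$ such that $a_u$ is placed strictly below $a_v$ on pile $P_i$ for some $1\le i\le k$. For $I\in\mathcal I$, $\mathcal M(I)\subseteq\mathcal I$ is the smallest family containing $I$ such that whenever $J\in\mathcal M(I)$ and $J'\vartriangleleft J$ then $J'\in\mathcal M(I)$ (the lower set of $I$ in the reflexive–transitive closure of $\vartriangleleft$). A set $I\in\mathcal I$ is $\vartriangleleft$-minimal if there is no $J\in\mathcal I$ with $J\vartriangleleft I$. *)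

theory Defs
  imports Main
begin

text \<open>The sequence is a function a :: nat => nat on indices 0..n with a 0 = 0.\<close>

definition feasible :: "(nat \<Rightarrow> nat) \<Rightarrow> nat \<Rightarrow> nat set \<Rightarrow> bool" where
  "feasible a n I \<longleftrightarrow> I \<subseteq> {0..n} \<and> (\<forall>i\<in>I. \<forall>j\<in>I. i < j \<longrightarrow> a i < a j)"

definition maxfeas :: "(nat \<Rightarrow> nat) \<Rightarrow> nat \<Rightarrow> nat set set" where
  "maxfeas a n = {I. feasible a n I \<and> (\<forall>J. feasible a n J \<longrightarrow> card J \<le> card I)}"

text \<open>Patience sorting. A pile is a list of indices, top element first.
  Index i is put on the first pile that is empty or whose top has a-value greater than a i.\<close>

fun pile_insert :: "(nat \<Rightarrow> nat) \<Rightarrow> nat \<Rightarrow> nat list list \<Rightarrow> nat list list" where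
  "pile_insert a i [] = [[i]]"
| "pile_insert a i (p # ps) =
     (if p = [] \<or> a (hd p) > a i then (i # p) # ps else p # pile_insert a i ps)"

definition piles :: "(nat \<Rightarrow> nat) \<Rightarrow> nat \<Rightarrow> nat list list" where
  "piles a n = foldl (\<lambda>ps i. pile_insert a i ps) [] [0..<Suc n]"

text \<open>u is placed strictly below v on pile P_j with 1 <= j <= k (indices are inserted in
  increasing order, so "put there before" means u < v).\<close>

definition placed_below :: "(nat \<Rightarrow> nat) \<Rightarrow> nat \<Rightarrow> nat \<Rightarrow> nat \<Rightarrow> bool" where
  "placed_below a n u v \<longleftrightarrow>
     (\<exists>j. 1 \<le> j \<and> j < length (piles a n) \<and>
          u \<in> set (piles a n ! j) \<and> v \<in> set (piles a n ! j) \<and> u < v)"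

definition tri :: "(nat \<Rightarrow> nat) \<Rightarrow> nat \<Rightarrow> nat set \<Rightarrow> nat set \<Rightarrow> bool" where
  "tri a n I J \<longleftrightarrow> I \<in> maxfeas a n \<and> J \<in> maxfeas a n \<and>
     (\<exists>u v. I - J = {u} \<and> J - I = {v} \<and> placed_below a n u v)"

definition Mset :: "(nat \<Rightarrow> nat) \<Rightarrow> nat \<Rightarrow> nat set \<Rightarrow> nat set set" where
  "Mset a n I = {J. (tri a n)\<^sup>*\<^sup>* J I}"

definition tri_minimal :: "(nat \<Rightarrow> nat) \<Rightarrow> nat \<Rightarrow> nat set \<Rightarrow> bool" where
  "tri_minimal a n I \<longleftrightarrow> I \<in> maxfeas a n \<and> \<not> (\<exists>J \<in> maxfeas a n. tri a n J I)"

end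

theory Submission imports Defs begin

lemma pile_insert_char:
  "\<exists>j \<le> length ps. (\<forall>q<j. ps!q \<noteq> [] \<and> a (hd (ps!q)) \<le> a i) \<and>
     (j < length ps \<longrightarrow> (ps!j = [] \<or> a i < a (hd (ps!j)))) \<and>
     pile_insert a i ps = (if j < length ps then ps[j := i # ps!j] else ps @ [[i]])"
proof (induction ps)
  case Nil
  then show ?case by simp
next
  case (Cons p ps)
  show ?case
  proof (cases "p = [] \<or> a (hd p) > a i")
    case True
    then show ?thesis by (intro exI[of _ 0]) auto
  next
    case False
    from Cons obtain j where j: "j \<le> length ps" "(\<forall>q<j. ps!q \<noteq> [] \<and> a (hd (ps!q)) \<le> a i)"
      "(j < length ps \<longrightarrow> (ps!j = [] \<or> a i < a (hd (ps!j))))"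
      "pile_insert a i ps = (if j < length ps then ps[j := i # ps!j] else ps @ [[i]])" by blast
    have A: "\<forall>q<Suc j. (p # ps) ! q \<noteq> [] \<and> a (hd ((p # ps) ! q)) \<le> a i"
    proof (intro allI impI)
      fix q assume "q < Suc j"
      then show "(p # ps) ! q \<noteq> [] \<and> a (hd ((p # ps) ! q)) \<le> a i"
        using False j(2) by (cases q) auto
    qed
    show ?thesis using A j False by (intro exI[of _ "Suc j"]) auto
  qed
qed

definition pinv :: "(nat\<Rightarrow>nat) \<Rightarrow> nat \<Rightarrow> nat list list \<Rightarrow> bool" where
"pinv a m ps \<longleftrightarrow>
 (\<forall>x<m. \<exists>j<length ps. x \<in> set (ps!j)) \<and>
 (\<forall>j<length ps. set (ps!j) \<subseteq> {..<m}) \<and>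
 (\<forall>i<length ps. \<forall>j<length ps. \<forall>x. x \<in> set(ps!i) \<longrightarrow> x \<in> set(ps!j) \<longrightarrow> i = j) \<and>
 (\<forall>j<length ps. ps!j \<noteq> []) \<and>
 (\<forall>j<length ps. \<forall>x\<in>set(ps!j). x \<le> hd (ps!j)) \<and>
 (\<forall>j<length ps. \<forall>x\<in>set(ps!j). \<forall>y\<in>set(ps!j). x<y \<longrightarrow> a y < a x) \<and>
 (\<forall>i j. i<j \<longrightarrow> j<length ps \<longrightarrow> a (hd(ps!i)) < a (hd(ps!j))) \<and>
 (\<forall>i<length ps. \<forall>j<length ps. \<forall>x\<in>set(ps!i). \<forall>y\<in>set(ps!j). x<y \<longrightarrow> a x < a y \<longrightarrow> i<j)"

lemma pinv_hd_le:
  assumes "pinv a m ps" "j < length ps" "x \<in> set (ps!j)"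
  shows "a (hd (ps!j)) \<le> a x"
proof -
  have ne: "ps!j \<noteq> []" and le: "x \<le> hd (ps!j)" and hd: "hd (ps!j) \<in> set (ps!j)"
    using assms unfolding pinv_def by auto
  show ?thesis
  proof (cases "x = hd (ps!j)")
    case False
    then have "x < hd (ps!j)" using le by simp
    then show ?thesis using assms hd unfolding pinv_def by (meson less_imp_le)
  qed simp
qed

lemma pinv_tops_le:
  assumes "pinv a m ps" "i \<le> j" "j < length ps"
  shows "a (hd (ps!i)) \<le> a (hd (ps!j))"
  using assms unfolding pinv_def
  by (metis le_eq_less_or_eq less_imp_le)

lemma pinv_step:
  assumes inv: "pinv a m ps" and inj: "inj_on a {0..m}"
  shows "pinv a (Suc m) (pile_insert a m ps)"
proof -
  obtain j where j: "j \<le> length ps" "(\<forall>q<j. ps!q \<noteq> [] \<and> a (hd (ps!q)) \<le> a m)"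
      "(j < length ps \<longrightarrow> (ps!j = [] \<or> a m < a (hd (ps!j))))"
      "pile_insert a m ps = (if j < length ps then ps[j := m # ps!j] else ps @ [[m]])"
    using pile_insert_char by blast
  have I1: "\<forall>x<m. \<exists>j<length ps. x \<in> set (ps!j)" using inv unfolding pinv_def by (elim conjE) assumption
  have I1': "\<forall>j<length ps. set (ps!j) \<subseteq> {..<m}" using inv unfolding pinv_def by (elim conjE) assumption
  have I2: "\<forall>i<length ps. \<forall>j<length ps. \<forall>x. x \<in> set(ps!i) \<longrightarrow> x \<in> set(ps!j) \<longrightarrow> i = j" using inv unfolding pinv_def by (elim conjE) assumption
  have I3: "\<forall>j<length ps. ps!j \<noteq> []" using inv unfolding pinv_def by (elim conjE) assumption
  have I4: "\<forall>j<length ps. \<forall>x\<in>set(ps!j). x \<le> hd (ps!j)" using inv unfolding pinv_def by (elim conjE) assumption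
  have I5: "\<forall>j<length ps. \<forall>x\<in>set(ps!j). \<forall>y\<in>set(ps!j). x<y \<longrightarrow> a y < a x" using inv unfolding pinv_def by (elim conjE) assumption
  have I6: "\<forall>i j. i<j \<longrightarrow> j<length ps \<longrightarrow> a (hd(ps!i)) < a (hd(ps!j))" using inv unfolding pinv_def by (elim conjE) assumption
  have I7: "\<forall>i<length ps. \<forall>j<length ps. \<forall>x\<in>set(ps!i). \<forall>y\<in>set(ps!j). x<y \<longrightarrow> a x < a y \<longrightarrow> i<j" using inv unfolding pinv_def by (elim conjE) assumption
  have I1x: "\<And>q x. q < length ps \<Longrightarrow> x \<in> set (ps!q) \<Longrightarrow> x < m" using I1' by blast
  have notin: "\<And>q. q < length ps \<Longrightarrow> m \<notin> set (ps!q)" using I1x by blast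
  have hdle: "\<And>q x. q < length ps \<Longrightarrow> x \<in> set (ps!q) \<Longrightarrow> a (hd (ps!q)) \<le> a x"
    using pinv_hd_le[OF inv] by blast
  have topsle: "\<And>q r. q \<le> r \<Longrightarrow> r < length ps \<Longrightarrow> a (hd (ps!q)) \<le> a (hd (ps!r))"
    using pinv_tops_le[OF inv] by blast
  have hdin: "\<And>q. q < length ps \<Longrightarrow> hd (ps!q) \<in> set (ps!q)" using I3 by simp
  have hdlt: "\<And>q. q < j \<Longrightarrow> a (hd (ps!q)) < a m"
  proof -
    fix q assume q: "q < j"
    then have "q < length ps" using j(1) by simp
    then have "hd (ps!q) < m" using hdin I1x by blast
    then have "a (hd (ps!q)) \<noteq> a m" using inj inj_on_def by (metis atLeastAtMost_iff less_imp_le_nat le0 le_refl nat_less_le)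
    then show "a (hd (ps!q)) < a m" using j(2) q by (simp add: order_less_le)
  qed
  show ?thesis
  proof (cases "j < length ps")
    case True
    let ?ps = "ps[j := m # ps!j]"
    have eq: "pile_insert a m ps = ?ps" using j(4) True by simp
    have gt: "a m < a (hd (ps!j))" using j(3) True I3 by blast
    have nth: "\<And>q. ?ps ! q = (if q = j then m # ps!j else ps!q)" using True by simp
    show ?thesis unfolding eq pinv_def length_list_update nth
    proof (intro conjI)
      show "\<forall>x<Suc m. \<exists>q<length ps. x \<in> set (if q = j then m # ps ! j else ps ! q)"
        using I1 True by (metis less_Suc_eq list.set_intros(1) list.set_intros(2))
      show "\<forall>q<length ps. set (if q = j then m # ps ! j else ps ! q) \<subseteq> {..<Suc m}"
        by (auto dest!: I1x)
      show "\<forall>i<length ps. \<forall>q<length ps. \<forall>x. x \<in> set (if i = j then m # ps ! j else ps ! i) \<longrightarrow>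
            x \<in> set (if q = j then m # ps ! j else ps ! q) \<longrightarrow> i = q"
      proof (intro allI impI)
        fix i q x assume iq: "i < length ps" "q < length ps"
          and x1: "x \<in> set (if i = j then m # ps ! j else ps ! i)"
          and x2: "x \<in> set (if q = j then m # ps ! j else ps ! q)"
        show "i = q"
        proof (cases "x = m")
          case True
          then have "i = j" "q = j" using x1 x2 iq I1x by (auto split: if_splits)
          then show ?thesis by simp
        next
          case False
          then have "x \<in> set (ps!i)" "x \<in> set (ps!q)" using x1 x2 by (auto split: if_splits)
          then show ?thesis using I2 iq by blast
        qed
      qed
      show "\<forall>q<length ps. (if q = j then m # ps ! j else ps ! q) \<noteq> []" using I3 by auto
      show "\<forall>q<length ps. \<forall>x\<in>set (if q = j then m # ps ! j else ps ! q). x \<le> hd (if q = j then m # ps ! j else ps ! q)"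
        using I4 by (auto simp: less_imp_le dest!: I1x)
      show "\<forall>q<length ps. \<forall>x\<in>set (if q = j then m # ps ! j else ps ! q). \<forall>y\<in>set (if q = j then m # ps ! j else ps ! q). x < y \<longrightarrow> a y < a x"
      proof (intro allI impI ballI)
        fix q x y assume q: "q < length ps"
          and x: "x \<in> set (if q = j then m # ps ! j else ps ! q)"
          and y: "y \<in> set (if q = j then m # ps ! j else ps ! q)" and xy: "x < y"
        show "a y < a x"
        proof (cases "q = j")
          case False
          then show ?thesis using I5 q x y xy by auto
        next
          case qj: True
          show ?thesis
          proof (cases "y = m")
            case True
            then have "x \<in> set (ps!j)" using x xy qj by auto
            then have "a (hd (ps!j)) \<le> a x" using hdle \<open>j < length ps\<close> by blast
            then show ?thesis using gt True by simp
          next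
            case False
            then have yo: "y \<in> set (ps!j)" using y qj by auto
            then have "y < m" using I1x \<open>j < length ps\<close> by blast
            then have "x \<in> set (ps!j)" using x xy qj by auto
            then show ?thesis using I5 yo xy \<open>j < length ps\<close> by blast
          qed
        qed
      qed
      show "\<forall>i q. i < q \<longrightarrow> q < length ps \<longrightarrow> a (hd (if i = j then m # ps ! j else ps ! i)) < a (hd (if q = j then m # ps ! j else ps ! q))"
      proof (intro allI impI)
        fix i q assume iq: "i < q" "q < length ps"
        show "a (hd (if i = j then m # ps ! j else ps ! i)) < a (hd (if q = j then m # ps ! j else ps ! q))"
        proof (cases "q = j")
          case True
          then show ?thesis using iq hdlt by auto
        next
          case False
          show ?thesis
          proof (cases "i = j")
            case True
            then have "a (hd (ps!j)) < a (hd (ps!q))" using I6 iq by blast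
            then show ?thesis using True False gt by simp
          next
            case False2: False
            then show ?thesis using I6 iq False by simp
          qed
        qed
      qed
      show "\<forall>i<length ps. \<forall>q<length ps. \<forall>x\<in>set (if i = j then m # ps ! j else ps ! i). \<forall>y\<in>set (if q = j then m # ps ! j else ps ! q). x < y \<longrightarrow> a x < a y \<longrightarrow> i < q"
      proof (intro allI impI ballI)
        fix i q x y
        assume i: "i < length ps" and q: "q < length ps"
          and x: "x \<in> set (if i = j then m # ps ! j else ps ! i)"
          and y: "y \<in> set (if q = j then m # ps ! j else ps ! q)" and xy: "x < y" "a x < a y"
        have xo: "x \<in> set (ps!i)" using x xy y i q by (auto split: if_splits dest!: I1x)
        show "i < q"
        proof (cases "y = m")
          case True
          then have "q = j" using y q by (auto split: if_splits dest!: I1x)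
          show ?thesis
          proof (rule ccontr)
            assume "\<not> i < q"
            then have "j \<le> i" using \<open>q = j\<close> by simp
            then have "a (hd (ps!j)) \<le> a (hd (ps!i))" using topsle i by blast
            moreover have "a (hd (ps!i)) \<le> a x" using hdle i xo by blast
            ultimately show False using gt xy True by simp
          qed
        next
          case False
          then have "y \<in> set (ps!q)" using y by (auto split: if_splits)
          then show ?thesis using I7 i q xo xy by blast
        qed
      qed
    qed
  next
    case False
    then have jl: "j = length ps" using j(1) by simp
    let ?ps = "ps @ [[m]]"
    let ?L = "length ps"
    have eq: "pile_insert a m ps = ?ps" using j(4) False by simp
    have len: "length ?ps = Suc ?L" by simp
    have nth: "\<And>q. q < Suc ?L \<Longrightarrow> ?ps ! q = (if q = ?L then [m] else ps!q)"
      by (simp add: nth_append)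
    have C1: "\<forall>x<Suc m. \<exists>q<Suc ?L. x \<in> set (?ps ! q)"
    proof (intro allI impI)
      fix x assume "x < Suc m"
      then consider "x < m" | "x = m" by linarith
      then show "\<exists>q<Suc ?L. x \<in> set (?ps ! q)"
      proof cases
        case 1
        then obtain q where "q < ?L" "x \<in> set (ps!q)" using I1 by blast
        then show ?thesis using nth[of q] by (intro exI[of _ q]) auto
      next
        case 2
        then show ?thesis using nth[of ?L] by (intro exI[of _ ?L]) auto
      qed
    qed
    have C2: "\<forall>q<Suc ?L. set (?ps ! q) \<subseteq> {..<Suc m}"
    proof (intro allI impI subsetI)
      fix q x assume "q < Suc ?L" "x \<in> set (?ps ! q)"
      then show "x \<in> {..<Suc m}"
      proof (cases "q = ?L")
        case False
        then have "q < ?L" using \<open>q < Suc ?L\<close> by simp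
        then show ?thesis using nth[of q] I1x[of q x] \<open>x \<in> set (?ps ! q)\<close> by simp
      qed (use nth in auto)
    qed
    have C3: "\<forall>i<Suc ?L. \<forall>q<Suc ?L. \<forall>x. x \<in> set (?ps ! i) \<longrightarrow> x \<in> set (?ps ! q) \<longrightarrow> i = q"
    proof (intro allI impI)
      fix i q x assume iq: "i < Suc ?L" "q < Suc ?L" and x1: "x \<in> set (?ps ! i)" and x2: "x \<in> set (?ps ! q)"
      show "i = q"
      proof (cases "x = m")
        case True
        then have "i = ?L" "q = ?L" using x1 x2 iq nth[of i] nth[of q] notin by (auto split: if_splits)
        then show ?thesis by simp
      next
        case False
        then have "i < ?L" "q < ?L" "x \<in> set (ps!i)" "x \<in> set (ps!q)"
          using x1 x2 iq nth[of i] nth[of q] by (auto split: if_splits)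
        then show ?thesis using I2 by blast
      qed
    qed
    have C4: "\<forall>q<Suc ?L. ?ps ! q \<noteq> []" using I3 nth by auto
    have C5: "\<forall>q<Suc ?L. \<forall>x\<in>set (?ps ! q). x \<le> hd (?ps ! q)"
      using I4 nth by auto
    have C6: "\<forall>q<Suc ?L. \<forall>x\<in>set (?ps ! q). \<forall>y\<in>set (?ps ! q). x < y \<longrightarrow> a y < a x"
    proof (intro allI impI ballI)
      fix q x y assume q: "q < Suc ?L" and x: "x \<in> set (?ps ! q)" and y: "y \<in> set (?ps ! q)" and xy: "x < y"
      show "a y < a x"
      proof (cases "q = ?L")
        case True then show ?thesis using x y xy nth[of q] by simp
      next
        case False
        then have "q < ?L" using q by simp
        then show ?thesis using x y xy nth[of q] I5 by simp
      qed
    qed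
    have C7: "\<forall>i q. i < q \<longrightarrow> q < Suc ?L \<longrightarrow> a (hd (?ps ! i)) < a (hd (?ps ! q))"
    proof (intro allI impI)
      fix i q assume iq: "i < q" "q < Suc ?L"
      show "a (hd (?ps ! i)) < a (hd (?ps ! q))"
      proof (cases "q = ?L")
        case True
        then show ?thesis using iq nth[of i] nth[of q] hdlt jl by simp
      next
        case False
        then show ?thesis using iq nth[of i] nth[of q] I6 by simp
      qed
    qed
    have C8: "\<forall>i<Suc ?L. \<forall>q<Suc ?L. \<forall>x\<in>set (?ps ! i). \<forall>y\<in>set (?ps ! q). x < y \<longrightarrow> a x < a y \<longrightarrow> i < q"
    proof (intro allI impI ballI)
      fix i q x y assume iq: "i < Suc ?L" "q < Suc ?L" and x: "x \<in> set (?ps ! i)" and y: "y \<in> set (?ps ! q)"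
        and xy: "x < y" "a x < a y"
      have "y \<le> m"
      proof (cases "q = ?L")
        case True then show ?thesis using y nth[of q] by simp
      next
        case False
        then have "q < ?L" using iq by simp
        then show ?thesis using y nth[of q] I1x[of q y] by simp
      qed
      then have "x \<noteq> m" using xy by simp
      then have xo: "i < ?L" "x \<in> set (ps!i)" using x iq nth[of i] by (auto split: if_splits)
      show "i < q"
      proof (cases "q = ?L")
        case True
        then show ?thesis using xo by simp
      next
        case False
        then show ?thesis using I7 xo iq y xy nth[of q] by auto
      qed
    qed
    show ?thesis unfolding eq pinv_def len using C1 C2 C3 C4 C5 C6 C7 C8 by (intro conjI)
  qed
qed

lemma pinv_foldl:
  assumes "inj_on a {0..n}" "m \<le> Suc n"
  shows "pinv a m (foldl (\<lambda>ps i. pile_insert a i ps) [] [0..<m])"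
  using assms(2)
proof (induction m)
  case 0
  then show ?case by (simp add: pinv_def)
next
  case (Suc m)
  have "inj_on a {0..m}" using assms(1) Suc.prems by (auto intro: inj_on_subset)
  then show ?case using Suc pinv_step by simp
qed

lemma pinv_piles:
  assumes "inj_on a {0..n}"
  shows "pinv a (Suc n) (piles a n)"
  unfolding piles_def by (rule pinv_foldl[OF assms]) simp


lemma pinv_cover: assumes "pinv a m ps" "x < m" shows "\<exists>j<length ps. x \<in> set (ps!j)"
proof -
  have "\<forall>x<m. \<exists>j<length ps. x \<in> set (ps!j)" using assms(1) unfolding pinv_def by (elim conjE) assumption
  then show ?thesis using assms(2) by blast
qed

lemma pinv_bound: assumes "pinv a m ps" "j < length ps" "x \<in> set (ps!j)" shows "x < m"
proof -
  have "\<forall>j<length ps. set (ps!j) \<subseteq> {..<m}" using assms(1) unfolding pinv_def by (elim conjE) assumption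
  then show ?thesis using assms(2,3) by blast
qed

lemma pinv_uniq: assumes "pinv a m ps" "i < length ps" "j < length ps" "x \<in> set (ps!i)" "x \<in> set (ps!j)"
  shows "i = j"
proof -
  have "\<forall>i<length ps. \<forall>j<length ps. \<forall>x. x \<in> set(ps!i) \<longrightarrow> x \<in> set(ps!j) \<longrightarrow> i = j"
    using assms(1) unfolding pinv_def by (elim conjE) assumption
  then show ?thesis using assms(2-5) by blast
qed

lemma pinv_pile: assumes "pinv a m ps" "j < length ps" "x \<in> set (ps!j)" "y \<in> set (ps!j)" "x < y"
  shows "a y < a x"
proof -
  have "\<forall>j<length ps. \<forall>x\<in>set(ps!j). \<forall>y\<in>set(ps!j). x<y \<longrightarrow> a y < a x"
    using assms(1) unfolding pinv_def by (elim conjE) assumption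
  then show ?thesis using assms(2-5) by blast
qed

lemma pinv_mono: assumes "pinv a m ps" "i < length ps" "j < length ps" "x \<in> set (ps!i)" "y \<in> set (ps!j)"
  "x < y" "a x < a y"
  shows "i < j"
proof -
  have "\<forall>i<length ps. \<forall>j<length ps. \<forall>x\<in>set(ps!i). \<forall>y\<in>set(ps!j). x<y \<longrightarrow> a x < a y \<longrightarrow> i<j"
    using assms(1) unfolding pinv_def by (elim conjE) assumption
  then show ?thesis using assms(2-7) by blast
qed

definition pidx :: "(nat \<Rightarrow> nat) \<Rightarrow> nat \<Rightarrow> nat \<Rightarrow> nat" where
  "pidx a n x = (THE j. j < length (piles a n) \<and> x \<in> set (piles a n ! j))"

lemma pidx_eq:
  assumes P: "pinv a (Suc n) (piles a n)" and j: "j < length (piles a n)" "x \<in> set (piles a n ! j)"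
  shows "pidx a n x = j"
  unfolding pidx_def
proof (rule the_equality)
  show "j < length (piles a n) \<and> x \<in> set (piles a n ! j)" using j by simp
next
  fix q assume "q < length (piles a n) \<and> x \<in> set (piles a n ! q)"
  then show "q = j" using pinv_uniq[OF P] j by blast
qed

lemma pidx_ex:
  assumes P: "pinv a (Suc n) (piles a n)" and x: "x \<le> n"
  shows "\<exists>j < length (piles a n). x \<in> set (piles a n ! j)"
  using pinv_cover[OF P, of x] x by simp

lemma pidx_mono:
  assumes P: "pinv a (Suc n) (piles a n)" and "x \<le> n" "y \<le> n" "x < y" "a x < a y"
  shows "pidx a n x < pidx a n y"
proof -
  obtain i where i: "i < length (piles a n)" "x \<in> set (piles a n ! i)" using pidx_ex[OF P] assms by blast
  obtain j where j: "j < length (piles a n)" "y \<in> set (piles a n ! j)" using pidx_ex[OF P] assms by blast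
  have "i < j" using pinv_mono[OF P i(1) j(1) i(2) j(2)] assms(4,5) by blast
  then show ?thesis using pidx_eq[OF P i] pidx_eq[OF P j] by simp
qed

lemma pb_props:
  assumes P: "pinv a (Suc n) (piles a n)" and pb: "placed_below a n u v"
  shows "u < v" "a v < a u" "pidx a n u = pidx a n v" "u \<le> n" "v \<le> n"
proof -
  obtain j where j: "1 \<le> j" "j < length (piles a n)" "u \<in> set (piles a n ! j)"
    "v \<in> set (piles a n ! j)" "u < v" using pb unfolding placed_below_def by blast
  show "u < v" using j by simp
  show "a v < a u" using pinv_pile[OF P j(2) j(3) j(4) j(5)] .
  show "pidx a n u = pidx a n v" using pidx_eq[OF P, of j] j by simp
  show "u \<le> n" "v \<le> n" using pinv_bound[OF P j(2)] j by (auto simp: less_Suc_eq_le)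
qed

lemma pb_same:
  assumes P: "pinv a (Suc n) (piles a n)" and "placed_below a n u v" "placed_below a n w v" "u < w"
  shows "placed_below a n u w"
proof -
  obtain j where j: "1 \<le> j" "j < length (piles a n)" "u \<in> set (piles a n ! j)"
    "v \<in> set (piles a n ! j)" using assms(2) unfolding placed_below_def by blast
  obtain q where q: "1 \<le> q" "q < length (piles a n)" "w \<in> set (piles a n ! q)"
    "v \<in> set (piles a n ! q)" using assms(3) unfolding placed_below_def by blast
  have "j = q" using pinv_uniq[OF P j(2) q(2) j(4) q(4)] .
  then show ?thesis unfolding placed_below_def using j q assms(4) by blast
qed

definition cmp :: "(nat \<Rightarrow> nat) \<Rightarrow> nat \<Rightarrow> nat \<Rightarrow> bool" where
  "cmp a x y \<longleftrightarrow> (x < y \<and> a x < a y) \<or> (y < x \<and> a y < a x)"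

lemma feasible_cmp: "feasible a n I \<Longrightarrow> x \<in> I \<Longrightarrow> y \<in> I \<Longrightarrow> x \<noteq> y \<Longrightarrow> cmp a x y"
  unfolding feasible_def cmp_def by (metis nat_neq_iff)

lemma cmp_feasible:
  assumes "I \<subseteq> {0..n}" "\<And>x y. x \<in> I \<Longrightarrow> y \<in> I \<Longrightarrow> x \<noteq> y \<Longrightarrow> cmp a x y"
  shows "feasible a n I"
  unfolding feasible_def using assms unfolding cmp_def by (metis less_not_sym)

lemma key:
  fixes p :: "nat \<Rightarrow> nat"
  assumes mono: "\<And>x y. x \<in> S \<Longrightarrow> y \<in> S \<Longrightarrow> x < y \<Longrightarrow> a x < a y \<Longrightarrow> p x < p y"
    and S: "u1 \<in> S" "u2 \<in> S" "v1 \<in> S" "v2 \<in> S"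
    and c: "cmp a v1 v2" "cmp a u1 v2" "cmp a u2 v1"
    and o: "u1 < v1" "a v1 < a u1" "u2 < v2" "a v2 < a u2"
    and pe: "p u1 = p v1" "p u2 = p v2"
  shows "u1 \<noteq> u2 \<and> cmp a u1 u2"
proof (cases "v1 < v2")
  case True
  then have "a v1 < a v2" using c(1) unfolding cmp_def by auto
  then have pv: "p v1 < p v2" using mono S True by blast
  have A: "u1 < v2 \<and> a u1 < a v2"
  proof (rule ccontr)
    assume "\<not> ?thesis"
    then have "v2 < u1" "a v2 < a u1" using c(2) unfolding cmp_def by auto
    then have "p v2 < p u1" using mono S by blast
    then show False using pv pe by simp
  qed
  have B: "v1 < u2 \<and> a v1 < a u2"
  proof (rule ccontr)
    assume "\<not> ?thesis"
    then have "u2 < v1" "a u2 < a v1" using c(3) unfolding cmp_def by auto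
    then have "p u2 < p v1" using mono S by blast
    then show False using pv pe by simp
  qed
  show ?thesis using A B o unfolding cmp_def by auto
next
  case False
  then have F: "v2 < v1" "a v2 < a v1" using c(1) unfolding cmp_def by auto
  then have pv: "p v2 < p v1" using mono S by blast
  have A: "v2 < u1 \<and> a v2 < a u1"
  proof (rule ccontr)
    assume "\<not> ?thesis"
    then have "u1 < v2" "a u1 < a v2" using c(2) unfolding cmp_def by auto
    then have "p u1 < p v2" using mono S by blast
    then show False using pv pe by simp
  qed
  have B: "u2 < v1 \<and> a u2 < a v1"
  proof (rule ccontr)
    assume "\<not> ?thesis"
    then have "v1 < u2" "a v1 < a u2" using c(3) unfolding cmp_def by auto
    then have "p v1 < p u2" using mono S by blast
    then show False using pv pe by simp
  qed
  show ?thesis using A B o unfolding cmp_def by auto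
qed

lemma tri_shape:
  assumes "tri a n J I"
  shows "\<exists>u v. J = insert u (I - {v}) \<and> u \<notin> I \<and> v \<in> I \<and> placed_below a n u v
     \<and> I \<in> maxfeas a n \<and> J \<in> maxfeas a n"
proof -
  obtain u v where uv: "J - I = {u}" "I - J = {v}" "placed_below a n u v"
    "I \<in> maxfeas a n" "J \<in> maxfeas a n"
    using assms unfolding tri_def by blast
  have "J = insert u (I - {v})" using uv(1,2) by blast
  moreover have "u \<notin> I" "v \<in> I" using uv(1,2) by blast+
  ultimately show ?thesis using uv by blast
qed

lemma maxfeas_finite: "I \<in> maxfeas a n \<Longrightarrow> finite I"
  unfolding maxfeas_def feasible_def by (auto intro: finite_subset)

lemma tri_sum_less:
  assumes P: "pinv a (Suc n) (piles a n)" and "tri a n J I"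
  shows "sum id J < sum id I"
proof -
  obtain u v where uv: "J = insert u (I - {v})" "u \<notin> I" "v \<in> I" "placed_below a n u v" "I \<in> maxfeas a n"
    using tri_shape[OF assms(2)] by blast
  have fin: "finite I" using maxfeas_finite uv(5) by blast
  have "u < v" using pb_props[OF P uv(4)] by simp
  have "sum id J = u + sum id (I - {v})" using uv fin by simp
  moreover have "sum id I = v + sum id (I - {v})" using uv fin by (simp add: sum.remove)
  ultimately show ?thesis using \<open>u < v\<close> by simp
qed

lemma local_conf:
  assumes P: "pinv a (Suc n) (piles a n)" and t1: "tri a n J1 I" and t2: "tri a n J2 I"
  shows "\<exists>K. (tri a n)\<^sup>*\<^sup>* K J1 \<and> (tri a n)\<^sup>*\<^sup>* K J2"
proof -
  obtain u1 v1 where 1: "J1 = insert u1 (I - {v1})" "u1 \<notin> I" "v1 \<in> I" "placed_below a n u1 v1"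
     "I \<in> maxfeas a n" "J1 \<in> maxfeas a n" using tri_shape[OF t1] by blast
  obtain u2 v2 where 2: "J2 = insert u2 (I - {v2})" "u2 \<notin> I" "v2 \<in> I" "placed_below a n u2 v2"
     "J2 \<in> maxfeas a n" using tri_shape[OF t2] by blast
  show ?thesis
  proof (cases "v1 = v2")
    case True
    consider "u1 = u2" | "u1 < u2" | "u2 < u1" by linarith
    then show ?thesis
    proof cases
      case 1
      then have "J1 = J2" using \<open>J1 = _\<close> 2(1) True by simp
      then show ?thesis by blast
    next
      case 3: 2
      have "placed_below a n u1 u2" using pb_same[OF P] 1(4) 2(4) True 3 by blast
      moreover have "J1 - J2 = {u1}" "J2 - J1 = {u2}" using 1 2 True 3 by auto
      ultimately have "tri a n J1 J2" unfolding tri_def using 1 2 by blast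
      then show ?thesis by blast
    next
      case 3
      have "placed_below a n u2 u1" using pb_same[OF P] 1(4) 2(4) True 3 by blast
      moreover have "J2 - J1 = {u2}" "J1 - J2 = {u1}" using 1 2 True 3 by auto
      ultimately have "tri a n J2 J1" unfolding tri_def using 1 2 by blast
      then show ?thesis by blast
    qed
  next
    case False
    have fI: "feasible a n I" and fJ1: "feasible a n J1" and fJ2: "feasible a n J2"
      using 1 2 unfolding maxfeas_def by auto
    have Ile: "I \<subseteq> {0..n}" "J1 \<subseteq> {0..n}" "J2 \<subseteq> {0..n}" using fI fJ1 fJ2 unfolding feasible_def by auto
    have c1: "cmp a v1 v2" using feasible_cmp[OF fI] 1(3) 2(3) False by blast
    have c2: "cmp a u1 v2" using feasible_cmp[OF fJ1, of u1 v2] 1 2(3) False by auto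
    have c3: "cmp a u2 v1" using feasible_cmp[OF fJ2, of u2 v1] 2 1(3) False by auto
    have o1: "u1 < v1" "a v1 < a u1" "pidx a n u1 = pidx a n v1" "u1 \<le> n" "v1 \<le> n"
      using pb_props[OF P 1(4)] by auto
    have o2: "u2 < v2" "a v2 < a u2" "pidx a n u2 = pidx a n v2" "u2 \<le> n" "v2 \<le> n"
      using pb_props[OF P 2(4)] by auto
    have k: "u1 \<noteq> u2 \<and> cmp a u1 u2"
      by (rule key[where S="{..n}" and p="pidx a n"])
         (use pidx_mono[OF P] c1 c2 c3 o1 o2 in auto)
    define K where "K = insert u1 (insert u2 (I - {v1, v2}))"
    have fin: "finite I" using maxfeas_finite 1(5) by blast
    have Ksub: "K \<subseteq> {0..n}" unfolding K_def using o1 o2 Ile by auto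
    have fK: "feasible a n K"
    proof (rule cmp_feasible[OF Ksub])
      fix x y assume xy: "x \<in> K" "y \<in> K" "x \<noteq> y"
      show "cmp a x y"
      proof (cases "x \<noteq> u2 \<and> y \<noteq> u2")
        case True
        then have "x \<in> J1" "y \<in> J1" using xy unfolding K_def 1(1) by auto
        then show ?thesis using feasible_cmp[OF fJ1] xy(3) by blast
      next
        case F1: False
        show ?thesis
        proof (cases "x \<noteq> u1 \<and> y \<noteq> u1")
          case True
          then have "x \<in> J2" "y \<in> J2" using xy unfolding K_def 2(1) by auto
          then show ?thesis using feasible_cmp[OF fJ2] xy(3) by blast
        next
          case False
          then have "(x = u1 \<and> y = u2) \<or> (x = u2 \<and> y = u1)" using F1 xy(3) k by auto
          then show ?thesis using k unfolding cmp_def by auto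
        qed
      qed
    qed
    have "card (I - {v1, v2}) = card I - 2"
      using fin 1(3) 2(3) False by (simp add: card_Diff_subset)
    moreover have "card I \<ge> 2"
    proof -
      have "card {v1, v2} \<le> card I" using fin 1(3) 2(3) by (intro card_mono) auto
      then show ?thesis using False by simp
    qed
    moreover have "card K = card (I - {v1, v2}) + 2"
      unfolding K_def using fin k 1(2) 2(2) by simp
    ultimately have cK: "card K = card I" by simp
    have KM: "K \<in> maxfeas a n" using fK cK 1(5) unfolding maxfeas_def by auto
    have "tri a n K J1"
      unfolding tri_def
    proof (intro conjI exI)
      show "K \<in> maxfeas a n" "J1 \<in> maxfeas a n" by (fact KM) (fact 1(6))
      show "K - J1 = {u2}" "J1 - K = {v2}" "placed_below a n u2 v2"
        using 1 2 k False unfolding K_def by auto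
    qed
    moreover have "tri a n K J2"
      unfolding tri_def
    proof (intro conjI exI)
      show "K \<in> maxfeas a n" "J2 \<in> maxfeas a n" by (fact KM) (fact 2(5))
      show "K - J2 = {u1}" "J2 - K = {v1}" "placed_below a n u1 v1"
        using 1 2 k False unfolding K_def by auto
    qed
    ultimately show ?thesis by blast
  qed
qed


lemma nf_exists:
  assumes P: "pinv a (Suc n) (piles a n)"
  shows "\<exists>N. (tri a n)\<^sup>*\<^sup>* N J \<and> \<not> (\<exists>K. tri a n K N)"
proof (induction J rule: measure_induct_rule[where f="sum id"])
  case (less J)
  show ?case
  proof (cases "\<exists>K. tri a n K J")
    case True
    then obtain K where K: "tri a n K J" by blast
    then have "sum id K < sum id J" using tri_sum_less[OF P] by blast
    then obtain N where "(tri a n)\<^sup>*\<^sup>* N K" "\<not> (\<exists>K. tri a n K N)" using less by blast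
    then show ?thesis using K by (meson rtranclp.rtrancl_into_rtrancl)
  next
    case False
    then show ?thesis by blast
  qed
qed

lemma rtp_last: "R\<^sup>*\<^sup>* x y \<Longrightarrow> x = y \<or> (\<exists>z. R\<^sup>*\<^sup>* x z \<and> R z y)"
  by (induction rule: rtranclp.induct) auto

lemma nf_unique:
  assumes P: "pinv a (Suc n) (piles a n)"
  shows "(tri a n)\<^sup>*\<^sup>* N1 J \<Longrightarrow> (tri a n)\<^sup>*\<^sup>* N2 J \<Longrightarrow> \<not> (\<exists>K. tri a n K N1)
    \<Longrightarrow> \<not> (\<exists>K. tri a n K N2) \<Longrightarrow> N1 = N2"
proof (induction J arbitrary: N1 N2 rule: measure_induct_rule[where f="sum id"])
  case (less J)
  show ?case
  proof (cases "N1 = J")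
    case True
    show ?thesis
    proof (rule ccontr)
      assume "N1 \<noteq> N2"
      then have "N2 \<noteq> J" using True by simp
      then obtain z where "tri a n z J" using rtp_last[OF less.prems(2)] by blast
      then show False using less.prems(3) True by blast
    qed
  next
    case N1: False
    obtain J1 where J1: "(tri a n)\<^sup>*\<^sup>* N1 J1" "tri a n J1 J"
      using N1 rtp_last[OF less.prems(1)] by blast
    have "N2 \<noteq> J" using less.prems(4) J1(2) by blast
    then obtain J2 where J2: "(tri a n)\<^sup>*\<^sup>* N2 J2" "tri a n J2 J"
      using rtp_last[OF less.prems(2)] by blast
    obtain K where K: "(tri a n)\<^sup>*\<^sup>* K J1" "(tri a n)\<^sup>*\<^sup>* K J2" using local_conf[OF P J1(2) J2(2)] by blast
    obtain N where N: "(tri a n)\<^sup>*\<^sup>* N K" "\<not> (\<exists>K. tri a n K N)" using nf_exists[OF P] by blast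
    have "N1 = N" using less.IH[OF tri_sum_less[OF P J1(2)] J1(1) rtranclp_trans[OF N(1) K(1)] less.prems(3) N(2)] .
    moreover have "N2 = N" using less.IH[OF tri_sum_less[OF P J2(2)] J2(1) rtranclp_trans[OF N(1) K(2)] less.prems(4) N(2)] .
    ultimately show ?thesis by simp
  qed
qed

lemma rt_maxfeas: "(tri a n)\<^sup>*\<^sup>* J I \<Longrightarrow> I \<in> maxfeas a n \<Longrightarrow> J \<in> maxfeas a n"
  by (induction rule: converse_rtranclp_induct) (auto simp: tri_def)

theorem lemma2:
  fixes a :: "nat \<Rightarrow> nat" and n :: nat and I :: "nat set"
  assumes "a 0 = 0"
    and "inj_on a {1..n}"
    and "a ` {1..n} \<subseteq> {1..n}"
    and "I \<in> maxfeas a n"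
  shows "\<exists>!J. J \<in> Mset a n I \<and> tri_minimal a n J"
proof -
  have inj: "inj_on a {0..n}"
  proof (rule inj_onI)
    fix x y assume xy: "x \<in> {0..n}" "y \<in> {0..n}" "a x = a y"
    have nz: "a z \<noteq> 0" if "z \<in> {0..n}" "z \<noteq> 0" for z
    proof -
      have "z \<in> {1..n}" using that by auto
      then have "a z \<in> {1..n}" using assms(3) by blast
      then show ?thesis by simp
    qed
    show "x = y"
    proof (cases "x = 0 \<or> y = 0")
      case True
      show ?thesis
      proof (rule ccontr)
        assume ne: "x \<noteq> y"
        show False
        proof (cases "x = 0")
          case True
          then have "y \<noteq> 0" using ne by simp
          then have "a y \<noteq> 0" using nz xy(2) by blast
          then show False using xy(3) True assms(1) by simp
        next
          case False
          then have "y = 0" using \<open>x = 0 \<or> y = 0\<close> by simp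
          have "a x \<noteq> 0" using nz xy(1) False by blast
          then show False using xy(3) \<open>y = 0\<close> assms(1) by simp
        qed
      qed
    next
      case False
      then have "x \<in> {1..n}" "y \<in> {1..n}" using xy by auto
      then show ?thesis using inj_onD[OF assms(2) xy(3)] by blast
    qed
  qed
  have P: "pinv a (Suc n) (piles a n)" using pinv_piles[OF inj] .
  obtain N where N: "(tri a n)\<^sup>*\<^sup>* N I" "\<not> (\<exists>K. tri a n K N)" using nf_exists[OF P] by blast
  have NM: "N \<in> maxfeas a n" using rt_maxfeas N(1) assms(4) by blast
  show ?thesis
  proof (rule ex1I[of _ N])
    have "N \<in> Mset a n I" unfolding Mset_def using N(1) by simp
    moreover have "tri_minimal a n N" unfolding tri_minimal_def
    proof
      show "N \<in> maxfeas a n" by (fact NM)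
      show "\<not> (\<exists>J\<in>maxfeas a n. tri a n J N)" using N(2) by blast
    qed
    ultimately show "N \<in> Mset a n I \<and> tri_minimal a n N" by (rule conjI)
  next
    fix J assume J: "J \<in> Mset a n I \<and> tri_minimal a n J"
    then have J1: "(tri a n)\<^sup>*\<^sup>* J I" unfolding Mset_def by simp
    have J2: "\<not> (\<exists>K. tri a n K J)"
    proof
      assume "\<exists>K. tri a n K J"
      then obtain K where K: "tri a n K J" by blast
      then have "K \<in> maxfeas a n" unfolding tri_def by simp
      moreover have "\<not> (\<exists>K\<in>maxfeas a n. tri a n K J)" using J unfolding tri_minimal_def by simp
      ultimately show False using K by blast
    qed
    show "J = N" using nf_unique[OF P J1 N(1) J2 N(2)] .
  qed
qed

end
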